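(* Let $a,b\in\mathbb{Z}$, $a\ne0$, $\mathcal{G}(x)=x^8+ax^6+bx^4+ax^2+1$, and $W_1=b+2-2a$, $W_2=b+2+2a$, $W_3=a^2-4b+8$. (1) If there is a prime $q$ with $q^2\mid W_1$ or $q^2\mid W_2$, then $\mathcal{G}(x)$ is not monogenic. (2) If $W_1$ and $W_2$ are squarefree and there is a prime $q\ge 3$ with $q^2\mid W_3$, then $\mathcal{G}(x)$ is not monogenic. (3) If $W_1,W_2$ are squarefree, $W_3$ is not divisible by the square of any odd prime, and $(a\bmod 4,\ b\bmod 4)\in\{(0,1),(2,3)\}$, then $\mathcal{G}(x)$ is not monogenic.
   Context: A monic polynomial $f(x)\in\mathbb{Z}[x]$ is monogenic if it is irreducible over $\mathbb{Q}$ and $\mathbb{Z}[\theta]$ is the full ring of integers of $\mathbb{Q}(\theta)$, where $f(\theta)=0$. *)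

theory Defs
  imports "HOL-Computational_Algebra.Computational_Algebra" Complex_Main
begin

definition algebraic_int :: "complex \<Rightarrow> bool" where
  "algebraic_int x \<longleftrightarrow> (\<exists>p :: int poly. lead_coeff p = 1 \<and> poly (map_poly of_int p) x = 0)"

definition rat_field_gen :: "complex \<Rightarrow> complex set" where
  "rat_field_gen \<theta> = {poly (map_poly of_rat p) \<theta> / poly (map_poly of_rat q) \<theta> | p q :: rat poly.
                         poly (map_poly of_rat q) \<theta> \<noteq> 0}"

definition ring_of_integers_gen :: "complex \<Rightarrow> complex set" where
  "ring_of_integers_gen \<theta> = {x \<in> rat_field_gen \<theta>. algebraic_int x}"

definition int_ring_gen :: "complex \<Rightarrow> complex set" where
  "int_ring_gen \<theta> = {poly (map_poly of_int p) \<theta> | p :: int poly. True}"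

text \<open>A monic integer polynomial is monogenic if it is irreducible over Q and
  Z[theta] is the full ring of integers of Q(theta) for a root theta of f
  (the choice of root is immaterial since all roots are conjugate).\<close>
definition monogenic :: "int poly \<Rightarrow> bool" where
  "monogenic f \<longleftrightarrow> lead_coeff f = 1 \<and> irreducible (map_poly (of_int :: int \<Rightarrow> rat) f) \<and>
     (\<forall>\<theta> :: complex. poly (map_poly of_int f) \<theta> = 0 \<longrightarrow> int_ring_gen \<theta> = ring_of_integers_gen \<theta>)"

end

theory Submission imports Defs "HOL-Computational_Algebra.Field_as_Ring" begin

lemma mp_add:
  fixes h :: "'a::comm_ring_1 \<Rightarrow> 'b::comm_ring_1"
  assumes "\<And>x y. h (x+y) = h x + h y" "h 0 = 0"
  shows "map_poly h (p + q) = map_poly h p + map_poly h q"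
  by (rule poly_eqI) (simp add: coeff_map_poly assms)
lemma mp_diff:
  fixes h :: "'a::comm_ring_1 \<Rightarrow> 'b::comm_ring_1"
  assumes "\<And>x y. h (x-y) = h x - h y" "h 0 = 0"
  shows "map_poly h (p - q) = map_poly h p - map_poly h q"
  by (rule poly_eqI) (simp add: coeff_map_poly assms)
lemma mp_mult:
  fixes h :: "'a::comm_ring_1 \<Rightarrow> 'b::comm_ring_1"
  assumes "\<And>x y. h (x+y) = h x + h y" "\<And>x y. h (x*y) = h x * h y" "h 0 = 0"
  shows "map_poly h (p * q) = map_poly h p * map_poly h q"
proof (induct p)
  case 0 then show ?case by simp
next
  case (pCons a p)
  show ?case
    by (simp add: mult_pCons_left mp_add[OF assms(1,3)] map_poly_smult[of h, OF assms(3,2)] map_poly_pCons[of h, OF assms(3)] pCons assms)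
qed
lemmas int_add = mp_add[where h = "of_int", simplified]
lemmas int_diff = mp_diff[where h = "of_int", simplified]
lemmas int_mult = mp_mult[where h = "of_int", simplified]
lemmas rat_add = mp_add[of of_rat, OF of_rat_add of_rat_0]
lemmas rat_diff = mp_diff[of of_rat, OF of_rat_diff of_rat_0]
lemmas rat_mult = mp_mult[of of_rat, OF of_rat_add of_rat_mult of_rat_0]


lemma reduce:
  fixes f p :: "int poly" and \<theta> :: complex
  assumes lc: "lead_coeff f = 1" and df: "degree f > 0" and rt: "poly (map_poly of_int f) \<theta> = 0"
  shows "\<exists>q. degree q < degree f \<and> poly (map_poly of_int q) \<theta> = poly (map_poly of_int p) \<theta>"
proof (induct p)
  case 0
  then show ?case using df by (intro exI[of _ 0]) simp
next
  case (pCons c p0)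
  then obtain q0 where d: "degree q0 < degree f" and e: "poly (map_poly of_int q0) \<theta> = poly (map_poly of_int p0) \<theta>"
    by blast
  define n where "n = degree f"
  define q where "q = [:c:] + pCons 0 q0 - smult (coeff q0 (n-1)) f"
  have "degree q \<le> n - 1"
  proof (rule degree_le, intro allI impI)
    fix i assume i: "n - 1 < i"
    show "coeff q i = 0"
    proof (cases "i = n")
      case True
      then have "coeff f i = 1" using lc n_def by simp
      then show ?thesis using True df n_def i by (auto simp: q_def coeff_pCons split: nat.split)
    next
      case False
      then have "i > n" using i by simp
      then have "coeff f i = 0" "coeff q0 (i-1) = 0" using d n_def by (auto intro!: coeff_eq_0)
      then show ?thesis using \<open>i > n\<close> by (cases i) (auto simp: q_def)
    qed
  qed
  then have "degree q < degree f" using df n_def by simp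
  moreover have "poly (map_poly of_int q) \<theta> = poly (map_poly of_int (pCons c p0)) \<theta>"
    unfolding q_def using e rt
    by (simp add: int_add int_diff map_poly_pCons map_poly_smult)
  ultimately show ?case by blast
qed

lemma irr_zero:
  fixes F g :: "rat poly" and \<theta> :: complex
  assumes irr: "irreducible F" and dg: "degree g < degree F"
    and rF: "poly (map_poly of_rat F) \<theta> = 0" and rg: "poly (map_poly of_rat g) \<theta> = 0"
  shows "g = 0"
proof (rule ccontr)
  assume g0: "g \<noteq> 0"
  define d where "d = gcd F g"
  have "d dvd F" unfolding d_def by simp
  then obtain e where Fe: "F = d * e" by (auto elim: dvdE)
  from irreducibleD[OF irr Fe] have "is_unit d \<or> is_unit e" .
  then show False
  proof
    assume "is_unit e"
    then have "F dvd g" using Fe d_def by (metis gcd_dvd2 mult_unit_dvd_iff)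
    then have "degree F \<le> degree g" using g0 by (rule dvd_imp_degree_le)
    then show False using dg by simp
  next
    assume "is_unit d"
    then have "gcd F g = 1" unfolding d_def by (meson is_unit_gcd coprime_imp_gcd_eq_1)
    then have "fst (bezout_coefficients F g) * F + snd (bezout_coefficients F g) * g = 1"
      using bezout_coefficients_fst_snd by metis
    then have "poly (map_poly of_rat (fst (bezout_coefficients F g) * F + snd (bezout_coefficients F g) * g)) \<theta> = 1"
      by simp
    then show False using rF rg by (simp add: rat_add rat_mult)
  qed
qed


lemma key:
  fixes f :: "int poly" and \<theta> :: complex and r :: "rat poly" and k j :: nat
  assumes mono: "monogenic f" and rt: "poly (map_poly of_int f) \<theta> = 0" and t0: "\<theta> \<noteq> 0"
    and ai: "algebraic_int (poly (map_poly of_rat r) \<theta> / \<theta>^k)"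
    and dr: "degree r < degree f" and nz: "coeff r j \<notin> \<int>"
  shows False
proof -
  from mono have lc: "lead_coeff f = 1" and irr: "irreducible (map_poly (of_int :: int \<Rightarrow> rat) f)"
    and eq: "int_ring_gen \<theta> = ring_of_integers_gen \<theta>" using rt unfolding monogenic_def by auto
  define e where "e = poly (map_poly of_rat r) \<theta> / \<theta>^k"
  have mk: "poly (map_poly of_rat (monom (1::rat) k)) \<theta> = \<theta>^k"
    by (simp add: map_poly_monom poly_monom)
  have "e \<in> rat_field_gen \<theta>" unfolding rat_field_gen_def e_def
    using t0 by (intro CollectI exI[of _ r] exI[of _ "monom 1 k"]) (simp add: mk)
  then have "e \<in> ring_of_integers_gen \<theta>" using ai unfolding ring_of_integers_gen_def e_def by simp
  then have "e \<in> int_ring_gen \<theta>" using eq by simp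
  then obtain p where pe: "e = poly (map_poly of_int p) \<theta>" unfolding int_ring_gen_def by auto
  have df: "degree f > 0" using dr by simp
  obtain q where dq: "degree q < degree f"
    and qe: "poly (map_poly of_int q) \<theta> = poly (map_poly of_int (p * monom 1 k)) \<theta>"
    using reduce[OF lc df rt] by blast
  have "poly (map_poly of_int (p * monom 1 k)) \<theta> = e * \<theta>^k"
    using pe by (simp add: int_mult map_poly_monom poly_monom)
  also have "\<dots> = poly (map_poly of_rat r) \<theta>" using t0 unfolding e_def by simp
  finally have qr: "poly (map_poly of_int q) \<theta> = poly (map_poly of_rat r) \<theta>" using qe by simp
  have mm: "map_poly (of_rat :: rat \<Rightarrow> complex) (map_poly of_int h) = map_poly of_int h" for h :: "int poly"
    by (simp add: map_poly_map_poly o_def)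
  define g where "g = map_poly (of_int :: int \<Rightarrow> rat) q - r"
  have dg: "degree g < degree (map_poly (of_int :: int \<Rightarrow> rat) f)"
  proof -
    have d1: "degree (map_poly (of_int :: int \<Rightarrow> rat) f) = degree f"
      by (rule map_poly_degree_eq) (simp add: lc)
    have d2: "degree (map_poly (of_int :: int \<Rightarrow> rat) q) \<le> degree q" by (rule map_poly_degree_leq)
    have "degree g \<le> max (degree (map_poly (of_int :: int \<Rightarrow> rat) q)) (degree r)"
      unfolding g_def by (rule degree_diff_le_max)
    then show ?thesis using d1 d2 dq dr by simp
  qed
  have "poly (map_poly of_rat g) \<theta> = 0" unfolding g_def using qr by (simp add: rat_diff mm)
  moreover have "poly (map_poly of_rat (map_poly (of_int :: int \<Rightarrow> rat) f)) \<theta> = 0" using rt by (simp add: mm)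
  ultimately have "g = 0" using irr_zero[OF irr dg] by blast
  then have "r = map_poly of_int q" unfolding g_def by simp
  then have "coeff r j = of_int (coeff q j)" by (simp add: coeff_map_poly)
  then show False using nz by simp
qed

lemma quartic:
  fixes u Q c W \<kappa> y :: complex
  assumes "u^4 + c*u^2 + W = 0" "W = Q^2 * \<kappa>" "Q \<noteq> 0" "y = u*(u^2+c)/Q"
  shows "y^4 + (c*\<kappa>)*y^2 + (\<kappa>^2*W) = 0"
proof -
  define t where "t = u^2"
  have "u^4 = t*t" unfolding t_def by algebra
  then have tt: "t*(t+c) = -W" using assms(1) unfolding t_def by algebra
  have sq: "(u*(u^2+c))^2 = u^2*(u^2+c)*(u^2+c)" by algebra
  have "y^2 = t*(t+c)*(t+c)/Q^2" using assms(4) unfolding t_def by (simp only: power_divide sq)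
  also have "\<dots> = -\<kappa>*(t+c)" using tt assms(2,3) by simp
  finally have y2: "y^2 = -\<kappa>*(t+c)" .
  have "y^4 = (y^2)^2" by simp
  then have "y^4 + (c*\<kappa>)*y^2 + (\<kappa>^2*W) = \<kappa>^2 * (t*(t+c) + W)" using y2 by algebra
  then show ?thesis using tt by simp
qed

lemma notint:
  assumes "(2::int) \<le> q" "\<not> q dvd m"
  shows "(of_int m / of_int q :: rat) \<notin> \<int>"
proof
  assume "(of_int m / of_int q :: rat) \<in> \<int>"
  then obtain n where "(of_int m / of_int q :: rat) = of_int n" by (auto elim: Ints_cases)
  then have "(of_int m :: rat) = of_int (q * n)" using assms(1) by (simp add: field_simps)
  then have "m = q * n" by (simp only: of_int_eq_iff)
  then show False using assms(2) by simp
qed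

lemma alg4:
  fixes y :: complex
  assumes "y^4 + of_int c * y^2 + of_int d = 0"
  shows "algebraic_int y"
  unfolding algebraic_int_def
  by (rule exI[of _ "[:d,0,c,0,1:]"]) (use assms in \<open>simp add: map_poly_pCons algebra_simps power2_eq_square power4_eq_xxxx\<close>)

lemma alg2:
  fixes y :: complex
  assumes "y^2 + of_int c * y + of_int d = 0"
  shows "algebraic_int y"
  unfolding algebraic_int_def
  by (rule exI[of _ "[:d,c,1:]"]) (use assms in \<open>simp add: map_poly_pCons algebra_simps power2_eq_square\<close>)


lemma caseU:
  fixes a b s q \<kappa> :: int and \<theta> :: complex and G :: "int poly"
  assumes mono: "monogenic G" and G: "G = [:1,0,a,0,b,0,a,0,1:]"
    and rt: "poly (map_poly of_int G) \<theta> = 0" and t0: "\<theta> \<noteq> 0"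
    and h: "\<theta>^8 + of_int a*\<theta>^6 + of_int b*\<theta>^4 + of_int a*\<theta>^2 + 1 = 0"
    and s: "s^2 = 1" and q: "2 \<le> q" and W: "b + 2 - 2*s*a = q^2 * \<kappa>"
  shows False
proof -
  define A where "A = (of_int a :: complex)"
  define B where "B = (of_int b :: complex)"
  define S where "S = (of_int s :: complex)"
  define Q where "Q = (of_int q :: complex)"
  define K where "K = (of_int \<kappa> :: complex)"
  have S2: "S^2 = 1" using s unfolding S_def by (metis of_int_1 of_int_power)
  have Q0: "Q \<noteq> 0" using q unfolding Q_def by simp
  have hh: "\<theta>^8 + A*\<theta>^6 + B*\<theta>^4 + A*\<theta>^2 + 1 = 0" using h unfolding A_def B_def .
  have WW: "B + 2 - 2*S*A = Q^2 * K" unfolding A_def B_def S_def Q_def K_def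
    using W by (metis (mono_tags) of_int_add of_int_diff of_int_mult of_int_numeral of_int_power)
  define r :: "rat poly" where "r = [:of_int s / of_int q, 0, of_int (s*a-1) / of_int q, 0, of_int (a-s) / of_int q, 0, 1 / of_int q:]"
  have pr: "poly (map_poly of_rat r) \<theta> = (\<theta>^6 + (A-S)*\<theta>^4 + (S*A-1)*\<theta>^2 + S)/Q"
    unfolding r_def A_def S_def Q_def using Q0[unfolded Q_def]
    by (simp add: map_poly_pCons of_rat_divide of_rat_diff of_rat_mult field_simps) (simp add: algebra_simps eval_nat_numeral)
  define ti where "ti = 1/\<theta>"
  have tti: "\<theta> * ti = 1" unfolding ti_def using t0 by simp
  define u where "u = \<theta> + S*ti"
  define y where "y = u*(u^2 + (A - 4*S))/Q"
  have "u^4 + (A-4*S)*u^2 + (B+2-2*S*A) = 0" unfolding u_def using S2 hh tti by algebra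
  from quartic[OF this WW Q0 y_def]
  have "y^4 + of_int ((a - 4*s)*\<kappa>) * y^2 + of_int (\<kappa>^2*(b+2-2*s*a)) = 0"
    unfolding A_def B_def S_def K_def by simp
  then have ai: "algebraic_int y" by (rule alg4)
  have "y = poly (map_poly of_rat r) \<theta> / \<theta>^3"
  proof -
    have "y * Q = (\<theta>^6 + (A-S)*\<theta>^4 + (S*A-1)*\<theta>^2 + S) * ti^3"
      unfolding y_def u_def using Q0 S2 tti by (simp add: divide_simps) algebra
    moreover have "ti^3 = 1/\<theta>^3" unfolding ti_def by (simp add: power_divide)
    ultimately show ?thesis unfolding pr using Q0 t0 by (simp add: field_simps)
  qed
  with ai have ai': "algebraic_int (poly (map_poly of_rat r) \<theta> / \<theta>^3)" by simp
  have dr: "degree r < degree G" unfolding r_def G using q by simp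
  have "coeff r 6 \<notin> \<int>" unfolding r_def using notint[OF q, of 1] q by (simp add: numeral_eq_Suc)
  then show False using key[OF mono rt t0 ai' dr] by blast
qed

lemma caseW:
  fixes a b q \<kappa> :: int and \<theta> :: complex and G :: "int poly"
  assumes mono: "monogenic G" and G: "G = [:1,0,a,0,b,0,a,0,1:]"
    and rt: "poly (map_poly of_int G) \<theta> = 0" and t0: "\<theta> \<noteq> 0"
    and h: "\<theta>^8 + of_int a*\<theta>^6 + of_int b*\<theta>^4 + of_int a*\<theta>^2 + 1 = 0"
    and q: "2 \<le> q" "\<not> q dvd 2" and W: "a^2 - 4*b + 8 = q^2 * \<kappa>"
  shows False
proof -
  define A where "A = (of_int a :: complex)"
  define B where "B = (of_int b :: complex)"
  define Q where "Q = (of_int q :: complex)"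
  define K where "K = (of_int \<kappa> :: complex)"
  have Q0: "Q \<noteq> 0" using q unfolding Q_def by simp
  have hh: "\<theta>^8 + A*\<theta>^6 + B*\<theta>^4 + A*\<theta>^2 + 1 = 0" using h unfolding A_def B_def .
  have WW: "A^2 - 4*B + 8 = Q^2 * K" unfolding A_def B_def Q_def K_def
    using W by (metis (mono_tags) of_int_add of_int_diff of_int_mult of_int_numeral of_int_power)
  define r :: "rat poly" where "r = [:2 / of_int q, 0, of_int a / of_int q, 0, 2 / of_int q:]"
  have pr: "poly (map_poly of_rat r) \<theta> = (2*\<theta>^4 + A*\<theta>^2 + 2)/Q"
    unfolding r_def A_def Q_def using Q0[unfolded Q_def]
    by (simp add: map_poly_pCons of_rat_divide of_rat_diff of_rat_mult field_simps) (simp add: algebra_simps eval_nat_numeral)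
  define ti where "ti = 1/\<theta>"
  have tti: "\<theta> * ti = 1" unfolding ti_def using t0 by simp
  define w where "w = 2*\<theta>^2 + 2*ti^2 + A"
  define y where "y = w/Q"
  have w2: "w^2 = Q^2 * K" unfolding w_def using WW hh tti by algebra
  have "y^2 + of_int 0 * y + of_int (-\<kappa>) = 0" unfolding y_def using w2 Q0
    by (simp add: power_divide K_def)
  then have ai: "algebraic_int y" by (rule alg2)
  have "y = poly (map_poly of_rat r) \<theta> / \<theta>^2"
  proof -
    have "y * Q = (2*\<theta>^4 + A*\<theta>^2 + 2) * ti^2"
      unfolding y_def w_def using Q0 tti by (simp add: divide_simps) algebra
    moreover have "ti^2 = 1/\<theta>^2" unfolding ti_def by (simp add: power_divide)
    ultimately show ?thesis unfolding pr using Q0 t0 by (simp add: field_simps)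
  qed
  with ai have ai': "algebraic_int (poly (map_poly of_rat r) \<theta> / \<theta>^2)" by simp
  have dr: "degree r < degree G" unfolding r_def G using q by simp
  have "coeff r 4 \<notin> \<int>" unfolding r_def using notint[OF q] q by (simp add: numeral_eq_Suc)
  then show False using key[OF mono rt t0 ai' dr] by blast
qed

lemma caseH:
  fixes a b \<kappa> :: int and \<theta> :: complex and G :: "int poly"
  assumes mono: "monogenic G" and G: "G = [:1,0,a,0,b,0,a,0,1:]"
    and rt: "poly (map_poly of_int G) \<theta> = 0" and t0: "\<theta> \<noteq> 0"
    and h: "\<theta>^8 + of_int a*\<theta>^6 + of_int b*\<theta>^4 + of_int a*\<theta>^2 + 1 = 0"
    and W: "a^2 - 4*b + 8 - 4 = 16 * \<kappa>"
  shows False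
proof -
  define A where "A = (of_int a :: complex)"
  define B where "B = (of_int b :: complex)"
  define K where "K = (of_int \<kappa> :: complex)"
  have hh: "\<theta>^8 + A*\<theta>^6 + B*\<theta>^4 + A*\<theta>^2 + 1 = 0" using h unfolding A_def B_def .
  have WW: "A^2 - 4*B + 8 - 4 = 16 * K" unfolding A_def B_def K_def
    using W by (metis (mono_tags) of_int_add of_int_diff of_int_mult of_int_numeral of_int_power)
  define r :: "rat poly" where "r = [:1 / 2, 0, (2 + of_int a) / 4, 0, 1 / 2:]"
  have pr: "poly (map_poly of_rat r) \<theta> = (2*\<theta>^4 + (2+A)*\<theta>^2 + 2)/4"
    unfolding r_def A_def
    by (simp add: map_poly_pCons of_rat_divide of_rat_diff of_rat_add of_rat_mult field_simps) (simp add: algebra_simps eval_nat_numeral)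
  define ti where "ti = 1/\<theta>"
  have tti: "\<theta> * ti = 1" unfolding ti_def using t0 by simp
  define w where "w = 2*\<theta>^2 + 2*ti^2 + A"
  define y where "y = (2 + w)/4"
  have w2: "w^2 - 4 = 16 * K" unfolding w_def using WW hh tti by algebra
  have "y^2 + of_int (-1) * y + of_int (-\<kappa>) = 0"
  proof -
    have "y^2 - y - K = (w^2 - 4 - 16*K)/16" unfolding y_def by (simp add: field_simps power2_eq_square)
    then show ?thesis using w2 by (simp add: K_def)
  qed
  then have ai: "algebraic_int y" by (rule alg2)
  have "y = poly (map_poly of_rat r) \<theta> / \<theta>^2"
  proof -
    have "y * 4 = (2*\<theta>^4 + (2+A)*\<theta>^2 + 2) * ti^2"
      unfolding y_def w_def using tti by (simp add: divide_simps) algebra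
    moreover have "ti^2 = 1/\<theta>^2" unfolding ti_def by (simp add: power_divide)
    ultimately show ?thesis unfolding pr using t0 by (simp add: field_simps)
  qed
  with ai have ai': "algebraic_int (poly (map_poly of_rat r) \<theta> / \<theta>^2)" by simp
  have dr: "degree r < degree G" unfolding r_def G by simp
  have "coeff r 4 \<notin> \<int>" unfolding r_def using notint[of 2 1] by (simp add: numeral_eq_Suc)
  then show False using key[OF mono rt t0 ai' dr] by blast
qed
theorem mainTheorem3:
  fixes a b :: int
  defines "G \<equiv> [:1, 0, a, 0, b, 0, a, 0, 1:]"
    and "W1 \<equiv> b + 2 - 2 * a"
    and "W2 \<equiv> b + 2 + 2 * a"
    and "W3 \<equiv> a ^ 2 - 4 * b + 8"
  assumes "a \<noteq> 0"
  shows "((\<exists>q :: int. prime q \<and> (q ^ 2 dvd W1 \<or> q ^ 2 dvd W2)) \<longrightarrow> \<not> monogenic G)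
       \<and> ((squarefree W1 \<and> squarefree W2 \<and> (\<exists>q :: int. prime q \<and> q \<ge> 3 \<and> q ^ 2 dvd W3))
            \<longrightarrow> \<not> monogenic G)
       \<and> ((squarefree W1 \<and> squarefree W2 \<and> (\<forall>q :: int. prime q \<and> odd q \<longrightarrow> \<not> q ^ 2 dvd W3)
            \<and> ((a mod 4, b mod 4) \<in> {(0, 1), (2, 3)})) \<longrightarrow> \<not> monogenic G)"
proof -
  define P where "P = map_poly (of_int :: int \<Rightarrow> complex) G"
  have ev: "poly P x = x^8 + of_int a * x^6 + of_int b * x^4 + of_int a * x^2 + 1" for x
    unfolding P_def G_def by (simp add: map_poly_pCons) (simp add: algebra_simps eval_nat_numeral)
  have "degree P = 8" unfolding P_def G_def by (simp add: map_poly_pCons)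
  then have "\<not> constant (poly P)" by (simp add: constant_degree)
  then obtain \<theta> where rt0: "poly P \<theta> = 0" using fundamental_theorem_of_algebra by blast
  have t0: "\<theta> \<noteq> 0" using ev[of 0] rt0 by auto
  have h: "\<theta>^8 + of_int a*\<theta>^6 + of_int b*\<theta>^4 + of_int a*\<theta>^2 + 1 = 0" using ev[of \<theta>] rt0 by simp
  have rt: "poly (map_poly of_int G) \<theta> = 0" using rt0 P_def by simp
  have GG: "G = [:1,0,a,0,b,0,a,0,1:]" unfolding G_def ..
  show ?thesis
  proof (intro conjI impI notI)
    assume mono: "monogenic G"
    assume "\<exists>q. prime q \<and> (q ^ 2 dvd W1 \<or> q ^ 2 dvd W2)"
    then obtain q :: int where q: "prime q" and d: "q ^ 2 dvd W1 \<or> q ^ 2 dvd W2" by blast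
    have q2: "2 \<le> q" using q by (rule prime_ge_2_int)
    from d show False
    proof
      assume "q ^ 2 dvd W1"
      then obtain \<kappa> where "W1 = q^2 * \<kappa>" by (auto elim: dvdE)
      then have "b + 2 - 2*1*a = q^2 * \<kappa>" unfolding W1_def by simp
      from caseU[OF mono GG rt t0 h _ q2 this] show False by simp
    next
      assume "q ^ 2 dvd W2"
      then obtain \<kappa> where "W2 = q^2 * \<kappa>" by (auto elim: dvdE)
      then have "b + 2 - 2*(-1)*a = q^2 * \<kappa>" unfolding W2_def by simp
      from caseU[OF mono GG rt t0 h _ q2 this] show False by simp
    qed
  next
    assume mono: "monogenic G"
    assume "squarefree W1 \<and> squarefree W2 \<and> (\<exists>q :: int. prime q \<and> q \<ge> 3 \<and> q ^ 2 dvd W3)"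
    then obtain q :: int where q: "prime q" "q \<ge> 3" and d: "q ^ 2 dvd W3" by blast
    have q2: "2 \<le> q" using q by simp
    have nd: "\<not> q dvd 2" using q zdvd_imp_le[of q 2] by auto
    obtain \<kappa> where "W3 = q^2 * \<kappa>" using d by (auto elim: dvdE)
    then have "a^2 - 4*b + 8 = q^2 * \<kappa>" unfolding W3_def by simp
    from caseW[OF mono GG rt t0 h q2 nd this] show False .
  next
    assume mono: "monogenic G"
    assume "squarefree W1 \<and> squarefree W2 \<and> (\<forall>q :: int. prime q \<and> odd q \<longrightarrow> \<not> q ^ 2 dvd W3)
            \<and> ((a mod 4, b mod 4) \<in> {(0, 1), (2, 3)})"
    then have m: "(a mod 4 = 0 \<and> b mod 4 = 1) \<or> (a mod 4 = 2 \<and> b mod 4 = 3)" by auto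
    define \<alpha> where "\<alpha> = a div 4"
    define \<beta> where "\<beta> = b div 4"
    have ea: "a = 4*\<alpha> + a mod 4" unfolding \<alpha>_def by simp
    have eb: "b = 4*\<beta> + b mod 4" unfolding \<beta>_def by simp
    from m show False
    proof
      assume c: "a mod 4 = 0 \<and> b mod 4 = 1"
      then have "a = 4*\<alpha>" "b = 4*\<beta> + 1" using ea eb by simp_all
      then have "a^2 - 4*b + 8 - 4 = 16 * (\<alpha>^2 - \<beta>)" by (simp add: algebra_simps power2_eq_square)
      from caseH[OF mono GG rt t0 h this] show False .
    next
      assume c: "a mod 4 = 2 \<and> b mod 4 = 3"
      then have "a = 4*\<alpha> + 2" "b = 4*\<beta> + 3" using ea eb by simp_all
      then have "a^2 - 4*b + 8 = 4^2 * (\<alpha>^2 + \<alpha> - \<beta>)" by (simp add: algebra_simps power2_eq_square)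
      from caseW[OF mono GG rt t0 h _ _ this] show False by simp
    qed
  qed
qed

end
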